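(* Let $\beta\in B_n$ with $\kappa(\beta)<\infty$. Then the length of the spectral sequence from the annular Khovanov homology of $\bar\beta$ to the Khovanov homology of $\bar\beta$ (i.e. the least $r$ such that $E^r=E^\infty$) is bounded below by $\kappa(\beta)$.
   Context: Work over $\mathbb{Z}/2$ with the Khovanov chain complex $\mathrm{CKh}(\bar\beta)$ of the braid closure (cube of resolutions, circles labeled $v_\pm$, Khovanov's differential). A circle of a resolution is nontrivial if it winds an odd number of times around the braid axis. The $k$-grading of a generator is (nontrivial circles labeled $v_+$) minus (nontrivial circles labeled $v_-$); the differential does not increase $k$, and $\mathcal{F}_i=\mathrm{span}\{x:k(x)\le i\}$ is a bounded filtration whose spectral sequence has $E^1$ page the annular Khovanov homology and converges to $\mathrm{Kh}(\bar\beta)$. $\psi(\bar\beta)$ labels all $n$ circles of the braidlike resolution ($0$-resolve positive, $1$-resolve negative crossings) by $v_-$. $\kappa(\beta)=n+\min\{i:\psi(\bar\beta)=dy,\ y\in\mathcal{F}_i\}$ if $\psi(\bar\beta)$ is a boundary, and $\infty$ otherwise. *)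

theory Defs
  imports Main "HOL-Library.FuncSet"
begin

text \<open>A braid word in B_n is a list of letters (i, pos) with 1 <= i < n; the letter
  (i, True) is the Artin generator sigma_i (a positive crossing of the closure), the
  letter (i, False) is its inverse (a negative crossing).  Strand positions are
  0-indexed 0..n-1, so sigma_i acts on positions i-1 and i.\<close>

definition braid_word :: "nat \<Rightarrow> (nat \<times> bool) list \<Rightarrow> bool" where
  "braid_word n w \<longleftrightarrow> n \<ge> 1 \<and> (\<forall>c\<in>set w. 1 \<le> fst c \<and> fst c < n)"

text \<open>Nodes of the diagram: (j, l) is the point of position j at level l, where crossing
  number k sits between levels k and k+1, and level (length w) is glued to level 0 by
  the braid closure.\<close>

definition nodes :: "nat \<Rightarrow> nat \<Rightarrow> (nat \<times> nat) set" where
  "nodes n c = {(j, l). j < n \<and> l \<le> c}"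

text \<open>A resolution is a bool list s (False = 0-resolution, True = 1-resolution).
  With Khovanov's convention, the 0-resolution of a positive crossing and the
  1-resolution of a negative crossing are the braidlike (oriented) ones; i.e. crossing k
  is resolved braidlike iff s!k differs from its sign.\<close>

definition res_edges :: "nat \<Rightarrow> (nat \<times> bool) list \<Rightarrow> bool list \<Rightarrow> ((nat \<times> nat) \<times> (nat \<times> nat)) set" where
  "res_edges n w s =
     {((j, length w), (j, 0)) | j. j < n}
   \<union> {((j, k), (j, Suc k)) | j k. k < length w \<and> j < n \<and> j \<noteq> fst (w!k) - 1 \<and> j \<noteq> fst (w!k)}
   \<union> {((j, k), (j, Suc k)) | j k. k < length w \<and> s!k \<noteq> snd (w!k) \<and> (j = fst (w!k) - 1 \<or> j = fst (w!k))}
   \<union> {((fst (w!k) - 1, l), (fst (w!k), l)) | k l. k < length w \<and> s!k = snd (w!k) \<and> (l = k \<or> l = Suc k)}"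

definition comp_rel :: "nat \<Rightarrow> (nat \<times> bool) list \<Rightarrow> bool list \<Rightarrow> ((nat \<times> nat) \<times> (nat \<times> nat)) set" where
  "comp_rel n w s = (res_edges n w s \<union> converse (res_edges n w s))\<^sup>* \<inter> (nodes n (length w) \<times> nodes n (length w))"

definition circles :: "nat \<Rightarrow> (nat \<times> bool) list \<Rightarrow> bool list \<Rightarrow> (nat \<times> nat) set set" where
  "circles n w s = nodes n (length w) // comp_rel n w s"

text \<open>Level 0 is a meridional half-plane page bounded by the braid axis, met transversally;
  a circle winds an odd number of times around the axis iff it meets it an odd number of
  times.\<close>
definition nontrivial :: "(nat \<times> nat) set \<Rightarrow> bool" where
  "nontrivial C \<longleftrightarrow> odd (card {j. (j, 0) \<in> C})"

text \<open>A generator: a resolution together with a labelling of its circles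
  (True = v_plus, False = v_minus).\<close>
type_synonym gen = "bool list \<times> ((nat \<times> nat) set \<Rightarrow> bool)"

definition gens :: "nat \<Rightarrow> (nat \<times> bool) list \<Rightarrow> gen set" where
  "gens n w = {(s, L). length s = length w \<and> L \<in> PiE (circles n w s) (\<lambda>_. UNIV)}"

definition kgr :: "nat \<Rightarrow> (nat \<times> bool) list \<Rightarrow> gen \<Rightarrow> int" where
  "kgr n w x = int (card {C \<in> circles n w (fst x). nontrivial C \<and> snd x C})
             - int (card {C \<in> circles n w (fst x). nontrivial C \<and> \<not> snd x C})"

text \<open>Coefficient (in Z/2) of generator y in Khovanov's differential of generator x:
  edge maps are the merge m(v+ v+) = v+, m(v+ v-) = m(v- v+) = v-, m(v- v-) = 0 and the
  split D(v+) = v+ v- + v- v+, D(v-) = v- v-, identity on untouched circles.\<close>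
definition coef :: "nat \<Rightarrow> (nat \<times> bool) list \<Rightarrow> gen \<Rightarrow> gen \<Rightarrow> bool" where
  "coef n w x y \<longleftrightarrow>
     (\<exists>k < length w. fst x ! k = False \<and> fst y = (fst x)[k := True] \<and>
       (let A = circles n w (fst x) - circles n w (fst y);
            B = circles n w (fst y) - circles n w (fst x) in
        (\<forall>C \<in> circles n w (fst x) \<inter> circles n w (fst y). snd y C = snd x C) \<and>
        ((card A = 2 \<and> card B = 1 \<and>
            (\<exists>C\<in>A. snd x C) \<and> (\<forall>D\<in>B. snd y D \<longleftrightarrow> (\<forall>C\<in>A. snd x C)))
         \<or> (card A = 1 \<and> card B = 2 \<and>
            (\<forall>C\<in>A. card {D \<in> B. \<not> snd y D} = (if snd x C then 1 else 2))))))"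

text \<open>Chains are finite subsets of the generators (Z/2-linear combinations); addition is
  symmetric difference.\<close>
definition chadd :: "gen set \<Rightarrow> gen set \<Rightarrow> gen set" where
  "chadd X Y = (X - Y) \<union> (Y - X)"

definition dchain :: "nat \<Rightarrow> (nat \<times> bool) list \<Rightarrow> gen set \<Rightarrow> gen set" where
  "dchain n w X = {y \<in> gens n w. odd (card {x \<in> X. coef n w x y})}"

definition chains :: "nat \<Rightarrow> (nat \<times> bool) list \<Rightarrow> gen set set" where
  "chains n w = Pow (gens n w)"

definition filt :: "nat \<Rightarrow> (nat \<times> bool) list \<Rightarrow> int \<Rightarrow> gen set set" where
  "filt n w i = {X. X \<subseteq> gens n w \<and> (\<forall>x\<in>X. kgr n w x \<le> i)}"

definition braidlike_res :: "(nat \<times> bool) list \<Rightarrow> bool list" where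
  "braidlike_res w = map (\<lambda>c. \<not> snd c) w"

definition psi :: "nat \<Rightarrow> (nat \<times> bool) list \<Rightarrow> gen set" where
  "psi n w = {(braidlike_res w, restrict (\<lambda>_. False) (circles n w (braidlike_res w)))}"

text \<open>kappa, with None standing for infinity.\<close>
definition kappa :: "nat \<Rightarrow> (nat \<times> bool) list \<Rightarrow> int option" where
  "kappa n w = (if \<exists>y \<in> chains n w. dchain n w y = psi n w
                then Some (int n + (LEAST i. \<exists>y \<in> filt n w i. dchain n w y = psi n w))
                else None)"

definition Zr :: "nat \<Rightarrow> (nat \<times> bool) list \<Rightarrow> nat \<Rightarrow> int \<Rightarrow> gen set set" where
  "Zr n w r p = {X \<in> filt n w p. dchain n w X \<in> filt n w (p - int r)}"

definition Br :: "nat \<Rightarrow> (nat \<times> bool) list \<Rightarrow> nat \<Rightarrow> int \<Rightarrow> gen set set" where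
  "Br n w r p = {chadd X (dchain n w Y) | X Y.
                   X \<in> Zr n w (r - 1) (p - 1) \<and> Y \<in> Zr n w (r - 1) (p + int r - 1)}"

definition page :: "nat \<Rightarrow> (nat \<times> bool) list \<Rightarrow> nat \<Rightarrow> int \<Rightarrow> gen set set set" where
  "page n w r p = Zr n w r p //
     {(X, Y). X \<in> Zr n w r p \<and> Y \<in> Zr n w r p \<and> chadd X Y \<in> Br n w r p}"

definition Zinf :: "nat \<Rightarrow> (nat \<times> bool) list \<Rightarrow> int \<Rightarrow> gen set set" where
  "Zinf n w p = {X \<in> filt n w p. dchain n w X = {}}"

definition Binf :: "nat \<Rightarrow> (nat \<times> bool) list \<Rightarrow> int \<Rightarrow> gen set set" where
  "Binf n w p = {chadd X Y | X Y. X \<in> Zinf n w (p - 1) \<and> Y \<in> filt n w p \<and>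
                    (\<exists>W \<in> chains n w. dchain n w W = Y)}"

definition page_inf :: "nat \<Rightarrow> (nat \<times> bool) list \<Rightarrow> int \<Rightarrow> gen set set set" where
  "page_inf n w p = Zinf n w p //
     {(X, Y). X \<in> Zinf n w p \<and> Y \<in> Zinf n w p \<and> chadd X Y \<in> Binf n w p}"

text \<open>E^r = E^infinity: the finite Z/2-vector spaces E^r_p and E^infinity_p are isomorphic
  (i.e. have the same cardinality) in every filtration degree p.\<close>
definition collapses_at :: "nat \<Rightarrow> (nat \<times> bool) list \<Rightarrow> nat \<Rightarrow> bool" where
  "collapses_at n w r \<longleftrightarrow> (\<forall>p. card (page n w r p) = card (page_inf n w p))"

definition ss_length :: "nat \<Rightarrow> (nat \<times> bool) list \<Rightarrow> nat" where
  "ss_length n w = (LEAST r. collapses_at n w r)"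

end

theory Submission
  imports Defs
begin

lemma finite_nodes: "finite (nodes n c)"
  by (rule finite_subset[of _ "{..<n} \<times> {..c}"]) (auto simp: nodes_def)

lemma comp_rel_equiv: "equiv (nodes n (length w)) (comp_rel n w s)"
proof (rule equivI)
  let ?E = "res_edges n w s \<union> converse (res_edges n w s)"
  show "comp_rel n w s \<subseteq> nodes n (length w) \<times> nodes n (length w)"
    by (auto simp: comp_rel_def)
  show "refl_on (nodes n (length w)) (comp_rel n w s)"
    by (auto simp: comp_rel_def refl_on_def)
  have s: "sym (?E\<^sup>*)" by (rule sym_rtrancl[OF sym_Un_converse])
  show "sym (comp_rel n w s)"
    using s unfolding comp_rel_def sym_def by blast
  have t: "trans (?E\<^sup>*)" by (rule trans_rtrancl)
  show "trans (comp_rel n w s)"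
    using t unfolding comp_rel_def trans_def by blast
qed

lemma finite_circles: "finite (circles n w s)"
  unfolding circles_def
  by (rule finite_quotient[OF finite_nodes]) (auto simp: comp_rel_def)

lemma circle_sub: "C \<in> circles n w s \<Longrightarrow> C \<subseteq> nodes n (length w)"
  unfolding circles_def using comp_rel_equiv
  by (metis Union_quotient Union_upper)

lemma card_nontriv: "card {C\<in>circles n w s. nontrivial C} \<le> n"
proof -
  let ?S = "{C\<in>circles n w s. nontrivial C}"
  define f where "f C = (SOME j. (j,0) \<in> C)" for C :: "(nat \<times> nat) set"
  have mem: "(f C, 0) \<in> C" if "C \<in> ?S" for C
  proof -
    from that have "odd (card {j. (j, 0) \<in> C})" by (simp add: nontrivial_def)
    hence "card {j. (j, 0) \<in> C} \<noteq> 0" by presburger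
    hence "{j. (j, 0) \<in> C} \<noteq> {}" by (metis card.empty)
    then obtain j where "(j,0) \<in> C" by blast
    thus ?thesis unfolding f_def by (rule someI)
  qed
  have "inj_on f ?S"
  proof (rule inj_onI)
    fix C D assume C: "C \<in> ?S" and D: "D \<in> ?S" and e: "f C = f D"
    from mem[OF C] mem[OF D] e have "C \<inter> D \<noteq> {}" by auto
    with quotient_disj[OF comp_rel_equiv] C D show "C = D"
      unfolding circles_def by blast
  qed
  moreover have "f ` ?S \<subseteq> {..<n}"
    using mem circle_sub by (fastforce simp: nodes_def)
  ultimately show ?thesis using card_inj_on_le[of f ?S "{..<n}"] by simp
qed

lemma finite_gens: "finite (gens n w)"
proof -
  have "gens n w \<subseteq> (\<Union>s\<in>{s. length s = length w}. {s} \<times> PiE (circles n w s) (\<lambda>_. UNIV))"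
    by (auto simp: gens_def)
  moreover have "finite (\<Union>s\<in>{s::bool list. length s = length w}. {s} \<times> PiE (circles n w s) (\<lambda>_. (UNIV::bool set)))"
  proof (intro finite_UN_I finite_SigmaI finite_PiE finite_circles)
    have "{s::bool list. length s = length w} = {s. set s \<subseteq> UNIV \<and> length s = length w}" by simp
    thus "finite {s::bool list. length s = length w}" using finite_lists_length_eq[of "UNIV::bool set"] by simp
  qed auto
  ultimately show ?thesis by (rule finite_subset)
qed

lemma kgr_bounds: "- int n \<le> kgr n w x \<and> kgr n w x \<le> int n"
proof -
  let ?a = "{C \<in> circles n w (fst x). nontrivial C \<and> snd x C}"
  let ?b = "{C \<in> circles n w (fst x). nontrivial C \<and> \<not> snd x C}"
  have "?a \<union> ?b = {C\<in>circles n w (fst x). nontrivial C}" by auto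
  moreover have "card (?a \<union> ?b) = card ?a + card ?b"
    by (rule card_Un_disjoint) (auto intro: finite_subset[OF _ finite_circles])
  ultimately have "card ?a + card ?b \<le> n" using card_nontriv by metis
  moreover have "kgr n w x = int (card ?a) - int (card ?b)" by (simp only: kgr_def)
  ultimately show ?thesis by linarith
qed

lemma filt_low: assumes "q < - int n" shows "filt n w q = {{}}"
proof -
  have h: "kgr n w x \<le> q \<Longrightarrow> False" for x using kgr_bounds[of n w x] assms by linarith
  show ?thesis by (auto simp: filt_def dest: h)
qed

lemma filt_high: assumes "q \<ge> int n" shows "filt n w q = Pow (gens n w)"
proof -
  have h: "kgr n w x \<le> q" for x using kgr_bounds[of n w x] assms by linarith
  show ?thesis by (auto simp: filt_def h)
qed

lemma empty_filt: "{} \<in> filt n w q" by (simp add: filt_def)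

lemma filt_chadd: "X \<in> filt n w q \<Longrightarrow> Y \<in> filt n w q \<Longrightarrow> chadd X Y \<in> filt n w q"
  by (auto simp: filt_def chadd_def)

lemma dchain_empty: "dchain n w {} = {}" by (simp add: dchain_def)

lemma odd_card_symdiff:
  assumes "finite A" "finite B"
  shows "odd (card ((A - B) \<union> (B - A))) \<longleftrightarrow> (odd (card A) \<noteq> odd (card B))"
proof -
  have "card ((A - B) \<union> (B - A)) = card (A - B) + card (B - A)"
    by (rule card_Un_disjoint) (use assms in auto)
  moreover have "card A = card (A \<inter> B) + card (A - B)"
    using assms(1) by (rule card_Int_Diff)
  moreover have "card B = card (B \<inter> A) + card (B - A)"
    using assms(2) by (rule card_Int_Diff)
  moreover have "B \<inter> A = A \<inter> B" by blast
  ultimately have "card ((A - B) \<union> (B - A)) + 2 * card (A \<inter> B) = card A + card B" by simp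
  thus ?thesis by (metis even_add even_mult_iff even_numeral)
qed

lemma dchain_chadd:
  assumes "finite X" "finite Y"
  shows "dchain n w (chadd X Y) = chadd (dchain n w X) (dchain n w Y)"
proof -
  have "odd (card {x \<in> chadd X Y. coef n w x y}) \<longleftrightarrow>
        (odd (card {x \<in> X. coef n w x y}) \<noteq> odd (card {x \<in> Y. coef n w x y}))" for y
  proof -
    have "{x \<in> chadd X Y. coef n w x y} =
       ({x \<in> X. coef n w x y} - {x \<in> Y. coef n w x y}) \<union> ({x \<in> Y. coef n w x y} - {x \<in> X. coef n w x y})"
      by (auto simp: chadd_def)
    thus ?thesis using odd_card_symdiff[of "{x \<in> X. coef n w x y}" "{x \<in> Y. coef n w x y}"] assms by simp
  qed
  thus ?thesis unfolding dchain_def chadd_def by auto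
qed

lemma braidlike_nth: "k < length w \<Longrightarrow> braidlike_res w ! k = (\<not> snd (w!k))"
  by (simp add: braidlike_res_def)

lemma edges_s0_fst: "(a,b) \<in> res_edges n w (braidlike_res w) \<Longrightarrow> fst a = fst b"
  by (auto simp: res_edges_def braidlike_nth)

lemma rel_s0_fst:
  assumes "(a,b) \<in> comp_rel n w (braidlike_res w)" shows "fst a = fst b"
proof -
  let ?E = "res_edges n w (braidlike_res w)"
  have "(a,b) \<in> (?E \<union> converse ?E)\<^sup>*" using assms by (simp add: comp_rel_def)
  thus ?thesis
  proof (induction rule: rtrancl_induct)
    case base then show ?case by simp
  next
    case (step y z) then show ?case using edges_s0_fst by fastforce
  qed
qed

definition cls0 :: "nat \<Rightarrow> (nat \<times> bool) list \<Rightarrow> nat \<Rightarrow> (nat \<times> nat) set" where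
  "cls0 n w j = comp_rel n w (braidlike_res w) `` {(j,0)}"

lemma cls0_in: "j < n \<Longrightarrow> cls0 n w j \<in> circles n w (braidlike_res w)"
  unfolding cls0_def circles_def by (rule quotientI) (simp add: nodes_def)

lemma cls0_self: "j < n \<Longrightarrow> (j,0) \<in> cls0 n w j"
  unfolding cls0_def
  by (rule equiv_class_self[OF comp_rel_equiv]) (simp add: nodes_def)

lemma cls0_fst: "x \<in> cls0 n w j \<Longrightarrow> fst x = j"
  unfolding cls0_def using rel_s0_fst by fastforce

lemma cls0_nontriv: "j < n \<Longrightarrow> nontrivial (cls0 n w j)"
proof -
  assume j: "j < n"
  have "{j'. (j', 0) \<in> cls0 n w j} = {j}" using cls0_self[OF j] cls0_fst[of _ n w j] by fastforce
  thus ?thesis by (simp add: nontrivial_def)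
qed

lemma cls0_inj: "inj_on (cls0 n w) {..<n}"
  by (rule inj_onI) (metis cls0_self cls0_fst fst_conv lessThan_iff)

definition g0 :: "nat \<Rightarrow> (nat \<times> bool) list \<Rightarrow> gen" where
  "g0 n w = (braidlike_res w, restrict (\<lambda>_. False) (circles n w (braidlike_res w)))"

lemma psi_g0: "psi n w = {g0 n w}" by (simp add: psi_def g0_def)

lemma g0_gens: "g0 n w \<in> gens n w"
  by (simp add: gens_def g0_def braidlike_res_def)

lemma kgr_g0: "kgr n w (g0 n w) \<le> - int n"
proof -
  let ?S = "{C \<in> circles n w (braidlike_res w). nontrivial C}"
  have "cls0 n w ` {..<n} \<subseteq> ?S" using cls0_in cls0_nontriv by auto
  hence "card (cls0 n w ` {..<n}) \<le> card ?S"
    by (rule card_mono[rotated]) (auto intro: finite_subset[OF _ finite_circles])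
  hence "n \<le> card ?S" using card_image[OF cls0_inj] by simp
  moreover have "{C \<in> circles n w (braidlike_res w). nontrivial C \<and> restrict (\<lambda>_. False) (circles n w (braidlike_res w)) C} = {}"
    by auto
  moreover have "{C \<in> circles n w (braidlike_res w). nontrivial C \<and> \<not> restrict (\<lambda>_. False) (circles n w (braidlike_res w)) C} = ?S"
    by auto
  ultimately show ?thesis unfolding kgr_def g0_def fst_conv snd_conv by simp
qed

lemma edge_vert:
  assumes "l < length w" "l \<noteq> k" "j < n"
  shows "((j,l),(j,Suc l)) \<in> res_edges n w ((braidlike_res w)[k := True])"
proof -
  have s: "(braidlike_res w)[k := True] ! l = (\<not> snd (w!l))"
    using assms by (simp add: braidlike_nth)
  show ?thesis
  proof (cases "j = fst (w!l) - 1 \<or> j = fst (w!l)")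
    case True
    then show ?thesis unfolding res_edges_def using s assms by blast
  next
    case False
    then show ?thesis unfolding res_edges_def using assms by blast
  qed
qed

lemma path_vert:
  assumes "k < length w" "j < n" "l \<le> k"
  shows "((j,0),(j,l)) \<in> (res_edges n w ((braidlike_res w)[k := True]) \<union>
            converse (res_edges n w ((braidlike_res w)[k := True])))\<^sup>*"
  using assms(3)
proof (induction l)
  case 0 then show ?case by simp
next
  case (Suc l)
  hence "((j,l),(j,Suc l)) \<in> res_edges n w ((braidlike_res w)[k := True])"
    using assms by (intro edge_vert) auto
  with Suc show ?case by (meson UnI1 Suc_leD rtrancl.rtrancl_into_rtrancl)
qed

lemma merge_rel:
  assumes bw: "braid_word n w" and k: "k < length w" and pos: "snd (w!k)"
  shows "((fst (w!k) - 1, 0), (fst (w!k), 0)) \<in> comp_rel n w ((braidlike_res w)[k := True])"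
proof -
  let ?s = "(braidlike_res w)[k := True]"
  let ?E = "res_edges n w ?s"
  let ?i = "fst (w!k)"
  have i: "1 \<le> ?i" "?i < n" using bw k by (auto simp: braid_word_def)
  have len: "length (braidlike_res w) = length w" by (simp add: braidlike_res_def)
  have h: "((?i - 1, k), (?i, k)) \<in> ?E"
    unfolding res_edges_def using k pos len by auto
  have p1: "((?i - 1, 0), (?i - 1, k)) \<in> (?E \<union> converse ?E)\<^sup>*"
    using path_vert[where k=k and w=w and j="?i - 1" and n=n and l=k] k i by auto
  have p2: "((?i, 0), (?i, k)) \<in> (?E \<union> converse ?E)\<^sup>*"
    using path_vert[where k=k and w=w and j="?i" and n=n and l=k] k i by auto
  have p2': "((?i, k), (?i, 0)) \<in> (?E \<union> converse ?E)\<^sup>*"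
    using sym_rtrancl[OF sym_Un_converse, of ?E] p2 unfolding sym_def by blast
  have "((?i - 1, 0), (?i, 0)) \<in> (?E \<union> converse ?E)\<^sup>*"
    using p1 h p2' by (meson UnI1 rtrancl.rtrancl_into_rtrancl rtrancl_trans)
  moreover have "(?i - 1, 0) \<in> nodes n (length w)" "(?i, 0) \<in> nodes n (length w)"
    using i by (auto simp: nodes_def)
  ultimately show ?thesis by (simp add: comp_rel_def len)
qed

lemma cls0_not_circle:
  assumes bw: "braid_word n w" and k: "k < length w" and pos: "snd (w!k)"
    and j: "j = fst (w!k) - 1 \<or> j = fst (w!k)"
  shows "cls0 n w j \<notin> circles n w ((braidlike_res w)[k := True])"
proof
  let ?s = "(braidlike_res w)[k := True]"
  let ?i = "fst (w!k)"
  have i: "1 \<le> ?i" "?i < n" using bw k by (auto simp: braid_word_def)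
  have jn: "j < n" using i j by auto
  assume "cls0 n w j \<in> circles n w ?s"
  then obtain x where x: "cls0 n w j = comp_rel n w ?s `` {x}" "x \<in> nodes n (length w)"
    unfolding circles_def by (auto elim: quotientE)
  have "(x, (j,0)) \<in> comp_rel n w ?s" using cls0_self[OF jn] x by auto
  hence eqc: "cls0 n w j = comp_rel n w ?s `` {(j,0)}"
    using x equiv_class_eq[OF comp_rel_equiv] by metis
  have m: "((?i - 1, 0), (?i, 0)) \<in> comp_rel n w ?s" by (rule merge_rel[OF bw k pos])
  have ms: "((?i, 0), (?i - 1, 0)) \<in> comp_rel n w ?s"
    using m comp_rel_equiv[of n w ?s] unfolding equiv_def sym_def by blast
  show False
  proof (cases "j = ?i")
    case True
    hence "(?i - 1, 0) \<in> cls0 n w j" using eqc ms by auto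
    thus False using cls0_fst True i by fastforce
  next
    case False
    hence "j = ?i - 1" using j by auto
    hence "(?i, 0) \<in> cls0 n w j" using eqc m by auto
    thus False using cls0_fst \<open>j = ?i - 1\<close> i by fastforce
  qed
qed

lemma not_coef_g0:
  assumes bw: "braid_word n w"
  shows "\<not> coef n w (g0 n w) y"
proof
  assume c: "coef n w (g0 n w) y"
  let ?s0 = "braidlike_res w"
  from c obtain k where k: "k < length w" and sk: "fst (g0 n w) ! k = False"
    and fy: "fst y = (fst (g0 n w))[k := True]"
    and rest: "(let A = circles n w (fst (g0 n w)) - circles n w (fst y);
            B = circles n w (fst y) - circles n w (fst (g0 n w)) in
        (\<forall>C \<in> circles n w (fst (g0 n w)) \<inter> circles n w (fst y). snd y C = snd (g0 n w) C) \<and>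
        ((card A = 2 \<and> card B = 1 \<and>
            (\<exists>C\<in>A. snd (g0 n w) C) \<and> (\<forall>D\<in>B. snd y D \<longleftrightarrow> (\<forall>C\<in>A. snd (g0 n w) C)))
         \<or> (card A = 1 \<and> card B = 2 \<and>
            (\<forall>C\<in>A. card {D \<in> B. \<not> snd y D} = (if snd (g0 n w) C then 1 else 2)))))"
    unfolding coef_def by blast
  have fg: "fst (g0 n w) = ?s0" by (simp add: g0_def)
  define A where "A = circles n w (fst (g0 n w)) - circles n w (fst y)"
  have sk: "?s0 ! k = False" using sk fg by simp
  have fy: "fst y = ?s0[k := True]" using fy fg by simp
  have pos: "snd (w!k)" using sk k by (simp add: braidlike_nth)
  let ?i = "fst (w!k)"
  have i: "1 \<le> ?i" "?i < n" using bw k by (auto simp: braid_word_def)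
  have a1: "cls0 n w (?i - 1) \<in> A" unfolding A_def fy fg
    using cls0_in[of "?i - 1" n w] cls0_not_circle[OF bw k pos, of "?i - 1"] i by auto
  have a2: "cls0 n w ?i \<in> A" unfolding A_def fy fg
    using cls0_in[of "?i" n w] cls0_not_circle[OF bw k pos, of "?i"] i by auto
  have ne: "cls0 n w (?i - 1) \<noteq> cls0 n w ?i"
    using cls0_inj[of n w] i unfolding inj_on_def by (metis diff_less lessThan_iff less_imp_diff_less less_numeral_extra(1) nat_neq_iff zero_less_one_class.zero_le_one le_less_trans less_le_trans)
  have fA: "finite A" unfolding A_def using finite_circles by auto
  have "2 \<le> card A"
  proof -
    have "card {cls0 n w (?i - 1), cls0 n w ?i} \<le> card A"
      using a1 a2 fA by (intro card_mono) auto
    thus ?thesis using ne by simp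
  qed
  moreover have "\<not> (\<exists>C\<in>A. snd (g0 n w) C)"
    unfolding A_def g0_def by auto
  ultimately show False using rest unfolding A_def[symmetric] Let_def by force
qed

lemma dchain_psi: assumes "braid_word n w" shows "dchain n w (psi n w) = {}"
proof -
  have e: "{x \<in> psi n w. coef n w x y} = {}" for y using not_coef_g0[OF assms] by (simp add: psi_g0)
  show ?thesis unfolding dchain_def e by simp
qed

lemma quot_lt:
  assumes fin: "finite K" and RS: "R \<subseteq> S" and eqS: "equiv K S" and RK: "R \<subseteq> K \<times> K"
    and refl: "\<And>x. x \<in> K \<Longrightarrow> (x,x) \<in> R" and symR: "\<And>x y. (x,y) \<in> R \<Longrightarrow> (y,x) \<in> R"
    and ab: "a \<in> K" "b \<in> K" "(a,b) \<in> S" "(a,b) \<notin> R"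
  shows "card (K//S) < card (K//R)"
proof -
  let ?f = "\<lambda>X. S``X"
  have trS: "\<And>x y z. (x,y) \<in> S \<Longrightarrow> (y,z) \<in> S \<Longrightarrow> (x,z) \<in> S"
    using eqS unfolding equiv_def trans_def by blast
  have cl: "S``(R``{x}) = S``{x}" if "x \<in> K" for x
    using refl[OF that] RS trS by blast
  have img: "?f ` (K//R) = K//S"
    unfolding quotient_def using cl by auto
  have finR: "finite (K//R)" by (rule finite_quotient[OF fin RK])
  have ne: "R``{a} \<noteq> R``{b}"
  proof
    assume "R``{a} = R``{b}"
    hence "(b,a) \<in> R" using refl[OF ab(1)] by blast
    thus False using symR ab(4) by blast
  qed
  have "S``{a} = S``{b}" using equiv_class_eq[OF eqS ab(3)] .
  hence fe: "?f (R``{a}) = ?f (R``{b})" using cl ab(1,2) by simp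
  have "\<not> inj_on ?f (K//R)"
  proof
    assume "inj_on ?f (K//R)"
    from inj_onD[OF this fe quotientI[OF ab(1)] quotientI[OF ab(2)]] ne show False by blast
  qed
  hence "card (?f ` (K//R)) \<noteq> card (K//R)" using eq_card_imp_inj_on[OF finR] by blast
  moreover have "card (?f ` (K//R)) \<le> card (K//R)" by (rule card_image_le[OF finR])
  ultimately show ?thesis using img by simp
qed

lemma quot_id_card: "card (A // {(X,Y). X \<in> A \<and> Y \<in> A \<and> X = Y}) = card A"
proof -
  have "A // {(X,Y). X \<in> A \<and> Y \<in> A \<and> X = Y} = (\<lambda>x. {x}) ` A"
    unfolding quotient_def by auto
  thus ?thesis by (simp add: card_image)
qed

lemma quot_full:
  assumes "a \<in> A" "\<And>X Y. X \<in> A \<Longrightarrow> Y \<in> A \<Longrightarrow> P X Y"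
  shows "card (A // {(X,Y). X \<in> A \<and> Y \<in> A \<and> P X Y}) = 1"
proof -
  have "A // {(X,Y). X \<in> A \<and> Y \<in> A \<and> P X Y} = {A}"
    unfolding quotient_def using assms by auto
  thus ?thesis by simp
qed

lemma chadd_empty[simp]: "chadd X {} = X" "chadd {} X = X" by (auto simp: chadd_def)
lemma chadd_self[simp]: "chadd X X = {}" by (auto simp: chadd_def)
lemma chadd_comm: "chadd X Y = chadd Y X" by (auto simp: chadd_def)
lemma chadd_trans: "chadd (chadd X Y) (chadd Y Z) = chadd X Z" by (auto simp: chadd_def)
lemma chadd_sub: "X \<subseteq> G \<Longrightarrow> Y \<subseteq> G \<Longrightarrow> chadd X Y \<subseteq> G" by (auto simp: chadd_def)

lemma filt_sub: "X \<in> filt n w q \<Longrightarrow> X \<subseteq> gens n w" by (simp add: filt_def)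
lemma filt_fin: "X \<in> filt n w q \<Longrightarrow> finite X"
  using finite_subset[OF filt_sub finite_gens] by blast
lemma filt_low_iff: "q < - int n \<Longrightarrow> X \<in> filt n w q \<longleftrightarrow> X = {}"
  by (simp add: filt_low)
lemma filt_high_iff: "int n \<le> q \<Longrightarrow> X \<in> filt n w q \<longleftrightarrow> X \<subseteq> gens n w"
  by (simp add: filt_high)

lemma dchain_filt_chadd:
  assumes "X \<subseteq> gens n w" "Y \<subseteq> gens n w" "dchain n w X \<in> filt n w q" "dchain n w Y \<in> filt n w q"
  shows "dchain n w (chadd X Y) \<in> filt n w q"
proof -
  have "finite X" "finite Y" using assms(1,2) finite_subset[OF _ finite_gens] by blast+
  thus ?thesis using dchain_chadd[of X Y n w] filt_chadd[OF assms(3,4)] by simp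
qed

lemma Zr_mem: "X \<in> Zr n w r p \<longleftrightarrow> X \<in> filt n w p \<and> dchain n w X \<in> filt n w (p - int r)"
  by (simp add: Zr_def)
lemma Zinf_mem: "X \<in> Zinf n w p \<longleftrightarrow> X \<in> filt n w p \<and> dchain n w X = {}"
  by (simp add: Zinf_def)

lemma psi_filt: "braid_word n w \<Longrightarrow> psi n w \<in> filt n w (- int n)"
  using g0_gens kgr_g0 by (simp add: psi_g0 filt_def)

lemma psi_K: "braid_word n w \<Longrightarrow> psi n w \<in> Zinf n w (- int n)"
  using psi_filt dchain_psi by (simp add: Zinf_mem)

lemma psi_ne: "psi n w \<noteq> {}" by (simp add: psi_g0)

lemma chains_eq: "chains n w = Pow (gens n w)" by (simp add: chains_def)

lemma chadd_eq_empty: "chadd X Y = {} \<longleftrightarrow> X = Y" by (auto simp: chadd_def)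

lemma kappa_least:
  assumes bw: "braid_word n w" and ka: "kappa n w = Some k"
  obtains i0 where "\<exists>W \<in> chains n w. dchain n w W = psi n w" "k = int n + i0"
    "\<And>j y. y \<in> filt n w j \<Longrightarrow> dchain n w y = psi n w \<Longrightarrow> i0 \<le> j"
proof -
  let ?P = "\<lambda>i. \<exists>y \<in> filt n w i. dchain n w y = psi n w"
  have ex: "\<exists>y \<in> chains n w. dchain n w y = psi n w"
    using ka by (auto simp: kappa_def split: if_splits)
  hence kk: "k = int n + (LEAST i. ?P i)" using ka by (simp add: kappa_def)
  have lb: "- int n \<le> j" if "?P j" for j
  proof (rule ccontr)
    assume "\<not> - int n \<le> j"
    hence "filt n w j = {{}}" by (intro filt_low) simp
    thus False using that psi_ne dchain_empty by (metis singletonD)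
  qed
  have Pn: "?P (int (n + n) - int n)"
    using ex by (simp add: chains_eq filt_high)
  define m0 where "m0 = (LEAST m::nat. ?P (int m - int n))"
  have Pm0: "?P (int m0 - int n)" unfolding m0_def by (rule LeastI[where P="\<lambda>m. ?P (int m - int n)" and k="n+n", OF Pn])
  have le: "int m0 - int n \<le> j" if "?P j" for j
  proof -
    have "int (nat (j + int n)) - int n = j" using lb[OF that] by simp
    hence "?P (int (nat (j + int n)) - int n)" using that by simp
    hence "m0 \<le> nat (j + int n)" unfolding m0_def by (rule Least_le)
    thus ?thesis using lb[OF that] by linarith
  qed
  have "(LEAST i. ?P i) = int m0 - int n"
    by (rule Least_equality[where P="?P", OF Pm0 le])
  show ?thesis
  proof (rule that[of "int m0 - int n"])
    show "\<exists>W \<in> chains n w. dchain n w W = psi n w" using ex .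
    show "k = int n + (int m0 - int n)" using kk \<open>(LEAST i. ?P i) = int m0 - int n\<close> by simp
    show "int m0 - int n \<le> j" if "y \<in> filt n w j" "dchain n w y = psi n w" for j y
      using le that by blast
  qed
qed

lemma Zinf_low: "q < - int n \<Longrightarrow> X \<in> Zinf n w q \<longleftrightarrow> X = {}"
  by (auto simp: Zinf_mem filt_low_iff dchain_empty)

lemma Binf_bottom:
  "Y \<in> Binf n w (- int n) \<longleftrightarrow> Y \<in> filt n w (- int n) \<and> (\<exists>W \<in> chains n w. dchain n w W = Y)"
proof -
  have z: "X \<in> Zinf n w (- int n - 1) \<longleftrightarrow> X = {}" for X by (rule Zinf_low) simp
  show ?thesis unfolding Binf_def using z by auto
qed

lemma equiv_S_bottom:
  assumes bw: "braid_word n w"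
  shows "equiv (Zinf n w (- int n))
           {(X, Y). X \<in> Zinf n w (- int n) \<and> Y \<in> Zinf n w (- int n) \<and> chadd X Y \<in> Binf n w (- int n)}"
    (is "equiv ?K ?S")
proof (rule equivI)
  show "?S \<subseteq> ?K \<times> ?K" by auto
  have e: "{} \<in> Binf n w (- int n)"
    by (simp add: Binf_bottom empty_filt chains_eq) (metis Pow_bottom dchain_empty)
  show "refl_on ?K ?S" unfolding refl_on_def using e by auto
  show "sym ?S" unfolding sym_def using chadd_comm by auto
  have cl: "chadd A B \<in> Binf n w (- int n)"
    if A: "A \<in> Binf n w (- int n)" and B: "B \<in> Binf n w (- int n)" for A B
  proof -
    obtain W1 where W1: "W1 \<subseteq> gens n w" "dchain n w W1 = A" using A by (auto simp: Binf_bottom chains_eq)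
    obtain W2 where W2: "W2 \<subseteq> gens n w" "dchain n w W2 = B" using B by (auto simp: Binf_bottom chains_eq)
    have f: "finite W1" "finite W2" using W1 W2 finite_subset[OF _ finite_gens] by blast+
    have "dchain n w (chadd W1 W2) = chadd A B" using dchain_chadd[OF f] W1 W2 by simp
    moreover have "chadd W1 W2 \<in> chains n w" using W1 W2 chadd_sub by (simp add: chains_eq)
    moreover have "chadd A B \<in> filt n w (- int n)" using A B filt_chadd by (simp add: Binf_bottom)
    ultimately show ?thesis by (auto simp: Binf_bottom)
  qed
  show "trans ?S" unfolding trans_def
  proof (intro allI impI)
    fix x y z assume "(x,y) \<in> ?S" "(y,z) \<in> ?S"
    thus "(x,z) \<in> ?S" using cl[of "chadd x y" "chadd y z"] chadd_trans[of x y z] by auto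
  qed
qed

lemma main_bound:
  assumes bw: "braid_word n w" and ka: "kappa n w = Some k" and col: "collapses_at n w r"
  shows "k \<le> int r"
proof (rule ccontr)
  assume nk: "\<not> k \<le> int r"
  obtain i0 where exW: "\<exists>W \<in> chains n w. dchain n w W = psi n w" and kk: "k = int n + i0"
    and mn: "\<And>j y. y \<in> filt n w j \<Longrightarrow> dchain n w y = psi n w \<Longrightarrow> i0 \<le> j"
    using kappa_least[OF bw ka] by metis
  define p where "p = - int n"
  define K where "K = Zinf n w p"
  define S where "S = {(X, Y). X \<in> K \<and> Y \<in> K \<and> chadd X Y \<in> Binf n w p}"
  have pinf: "page_inf n w p = K // S" by (simp add: page_inf_def K_def S_def)
  have eqS: "equiv K S" unfolding K_def S_def p_def by (rule equiv_S_bottom[OF bw])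
  have finK: "finite K"
    by (rule finite_subset[of _ "Pow (gens n w)"]) (auto simp: K_def Zinf_mem filt_def finite_gens)
  have psiK: "psi n w \<in> K" using psi_K[OF bw] by (simp add: K_def p_def)
  have eK: "{} \<in> K" by (simp add: K_def Zinf_mem empty_filt dchain_empty)
  have psiS: "(psi n w, {}) \<in> S"
    using psiK eK exW psi_filt[OF bw] by (simp add: S_def p_def Binf_bottom)
  have low: "q < p \<Longrightarrow> X \<in> filt n w q \<longleftrightarrow> X = {}" for q X
    by (rule filt_low_iff) (simp add: p_def)
  have colp: "card (page n w r p) = card (page_inf n w p)" using col by (simp add: collapses_at_def)
  show False
  proof (cases "r = 0")
    case True
    define Z0 where "Z0 = Zr n w 0 p"
    have Br0: "Br n w 0 p = {{}}"
    proof -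
      have "Z \<in> Br n w 0 p \<longleftrightarrow> Z = {}" for Z
        unfolding Br_def Zr_mem using low[of "p - 1"] low[of "p + 0 - 1"] dchain_empty empty_filt
        by auto
      thus ?thesis by blast
    qed
    have pg: "page n w r p = Z0 // {(X,Y). X \<in> Z0 \<and> Y \<in> Z0 \<and> X = Y}"
      unfolding page_def True Br0 Z0_def by (simp add: chadd_eq_empty)
    have KZ: "K \<subseteq> Z0" by (auto simp: K_def Z0_def Zinf_mem Zr_mem empty_filt)
    have finZ: "finite Z0"
      by (rule finite_subset[of _ "Pow (gens n w)"]) (auto simp: Z0_def Zr_mem filt_def finite_gens)
    have "card (K // S) < card (K // {(X,Y). X \<in> K \<and> Y \<in> K \<and> X = Y})"
    proof (rule quot_lt[OF finK _ eqS, where a="psi n w" and b="{}"])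
      show "{(X,Y). X \<in> K \<and> Y \<in> K \<and> X = Y} \<subseteq> S"
        using eqS unfolding equiv_def refl_on_def by auto
    qed (use psiK eK psiS psi_ne in auto)
    also have "\<dots> = card K" by (rule quot_id_card)
    also have "\<dots> \<le> card Z0" by (rule card_mono[OF finZ KZ])
    finally show False using colp pinf pg quot_id_card[of Z0] by simp
  next
    case False
    have Zr_eq: "Zr n w r p = K"
    proof -
      have "p - int r < p" using False by simp
      thus ?thesis unfolding K_def by (auto simp: Zr_mem Zinf_mem low)
    qed
    define R where "R = {(X, Y). X \<in> K \<and> Y \<in> K \<and> chadd X Y \<in> Br n w r p}"
    have pg: "page n w r p = K // R" by (simp add: page_def Zr_eq R_def)
    have r1: "int (r - 1) = int r - 1" using False by simp
    have BrD: "Z \<in> Binf n w p \<and> (\<exists>Y \<in> filt n w (p + int r - 1). dchain n w Y = Z)"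
      if Zin: "Z \<in> Br n w r p" for Z
    proof -
      obtain X Y where Z: "Z = chadd X (dchain n w Y)" and X: "X \<in> Zr n w (r - 1) (p - 1)"
        and Y: "Y \<in> Zr n w (r - 1) (p + int r - 1)" using Zin unfolding Br_def by blast
      have "X = {}" using X low[of "p - 1"] by (simp add: Zr_mem)
      hence Z': "Z = dchain n w Y" using Z by simp
      have Yf: "Y \<in> filt n w (p + int r - 1)" and dY: "dchain n w Y \<in> filt n w p"
        using Y r1 by (simp_all add: Zr_mem)
      have "Y \<in> chains n w" using Yf by (simp add: chains_eq filt_def)
      thus ?thesis using Z' Yf dY by (auto simp: Binf_bottom[where n=n and w=w, folded p_def])
    qed
    have eBr: "{} \<in> Br n w r p"
    proof -
      have "{} \<in> Zr n w (r - 1) (p - 1)" "{} \<in> Zr n w (r - 1) (p + int r - 1)"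
        by (simp_all add: Zr_mem empty_filt dchain_empty)
      hence "chadd {} (dchain n w {}) \<in> Br n w r p" unfolding Br_def by blast
      thus ?thesis by (simp add: dchain_empty)
    qed
    have "card (K // S) < card (K // R)"
    proof (rule quot_lt[OF finK _ eqS, where a="psi n w" and b="{}"])
      show "R \<subseteq> S" unfolding R_def S_def using BrD by auto
      show "R \<subseteq> K \<times> K" unfolding R_def by auto
      show "\<And>x. x \<in> K \<Longrightarrow> (x, x) \<in> R" unfolding R_def using eBr by simp
      show "\<And>x y. (x, y) \<in> R \<Longrightarrow> (y, x) \<in> R" unfolding R_def using chadd_comm by auto
      show "(psi n w, {}) \<notin> R"
      proof
        assume "(psi n w, {}) \<in> R"
        hence "psi n w \<in> Br n w r p" by (simp add: R_def)
        then obtain Y where "Y \<in> filt n w (p + int r - 1)" "dchain n w Y = psi n w"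
          using BrD by blast
        hence "i0 \<le> p + int r - 1" by (rule mn)
        thus False using nk kk by (simp add: p_def)
      qed
    qed (use psiK eK psiS in auto)
    thus False using colp pinf pg by simp
  qed
qed

lemma collapse_exists: "collapses_at n w (2*n+1)"
  unfolding collapses_at_def
proof
  fix p :: int
  let ?r = "2*n+1"
  have r1: "int (?r - 1) = 2 * int n" by simp
  show "card (page n w ?r p) = card (page_inf n w p)"
  proof (cases "p < - int n")
    case True
    have "Zr n w ?r p = {{}}"
      using True by (auto simp: Zr_mem filt_low_iff dchain_empty empty_filt)
    moreover have "Zinf n w p = {{}}"
      using True by (auto simp: Zinf_mem filt_low_iff dchain_empty)
    ultimately show ?thesis by (simp add: page_def page_inf_def singleton_quotient)
  next
    case nlow: False
    show ?thesis
    proof (cases "p \<le> int n")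
      case True
      have zr: "Zr n w ?r p = Zinf n w p"
        using True nlow by (auto simp: Zr_mem Zinf_mem filt_low_iff)
      have zA: "X \<in> Zr n w (?r - 1) (p - 1) \<longleftrightarrow> X \<in> Zinf n w (p - 1)" for X
        using True nlow r1 by (auto simp: Zr_mem Zinf_mem filt_low_iff)
      have zB: "Y \<in> Zr n w (?r - 1) (p + int ?r - 1) \<longleftrightarrow> Y \<subseteq> gens n w \<and> dchain n w Y \<in> filt n w p" for Y
        using True nlow r1 by (auto simp: Zr_mem filt_high_iff)
      have br: "Br n w ?r p = Binf n w p"
        unfolding Br_def Binf_def zA zB by (auto simp: chains_eq)
      show ?thesis unfolding page_def page_inf_def zr br by (rule refl)
    next
      case False
      have hi: "X \<in> filt n w (p - 1) \<longleftrightarrow> X \<subseteq> gens n w" for X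
        using False by (intro filt_high_iff) simp
      have c1: "card (page n w ?r p) = 1"
        unfolding page_def
      proof (rule quot_full)
        show "{} \<in> Zr n w ?r p" by (simp add: Zr_mem empty_filt dchain_empty)
        fix X Y assume X: "X \<in> Zr n w ?r p" and Y: "Y \<in> Zr n w ?r p"
        have Xg: "X \<subseteq> gens n w" and Yg: "Y \<subseteq> gens n w"
          using X Y by (auto simp: Zr_mem filt_def)
        have "dchain n w (chadd X Y) \<in> filt n w (p - int (2*n+1))"
          using X Y Xg Yg by (intro dchain_filt_chadd) (auto simp: Zr_mem)
        hence "chadd X Y \<in> Zr n w (?r - 1) (p - 1)"
          using Xg Yg chadd_sub[OF Xg Yg] by (simp add: Zr_mem hi algebra_simps)
        moreover have "{} \<in> Zr n w (?r - 1) (p + int ?r - 1)"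
          by (simp add: Zr_mem empty_filt dchain_empty)
        ultimately have "chadd (chadd X Y) (dchain n w {}) \<in> Br n w ?r p"
          unfolding Br_def by blast
        thus "chadd X Y \<in> Br n w ?r p" by (simp add: dchain_empty)
      qed
      have c2: "card (page_inf n w p) = 1"
        unfolding page_inf_def
      proof (rule quot_full)
        show "{} \<in> Zinf n w p" by (simp add: Zinf_mem empty_filt dchain_empty)
        fix X Y assume X: "X \<in> Zinf n w p" and Y: "Y \<in> Zinf n w p"
        have Xg: "X \<subseteq> gens n w" and Yg: "Y \<subseteq> gens n w"
          using X Y by (auto simp: Zinf_mem filt_def)
        have fX: "finite X" "finite Y" using Xg Yg finite_subset[OF _ finite_gens] by blast+
        have "chadd X Y \<in> Zinf n w (p - 1)"
          using X Y chadd_sub[OF Xg Yg] dchain_chadd[OF fX, of n w] by (simp add: Zinf_mem hi)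
        moreover have "{} \<in> filt n w p" by (rule empty_filt)
        moreover have "\<exists>W \<in> chains n w. dchain n w W = {}"
          by (rule bexI[of _ "{}"]) (simp_all add: dchain_empty chains_eq)
        ultimately have "chadd (chadd X Y) {} \<in> Binf n w p"
          unfolding Binf_def by blast
        thus "chadd X Y \<in> Binf n w p" by simp
      qed
      show ?thesis using c1 c2 by simp
    qed
  qed
qed

theorem mainTheorem11:
  fixes n :: nat and w :: "(nat \<times> bool) list" and k :: int
  assumes "braid_word n w"
    and "kappa n w = Some k"
  shows "k \<le> int (ss_length n w)"
proof -
  have "collapses_at n w (ss_length n w)"
    unfolding ss_length_def by (rule LeastI[of "collapses_at n w", OF collapse_exists])
  thus ?thesis by (rule main_bound[OF assms])
qed

end
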